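(* Let $n \in \mathbb{N}$ and let $y \in L^2([0,1]^n)$. Suppose $x^\dagger \in L^2([0,1]^n)$ satisfies $[x^\dagger * x^\dagger](s) = y(s)$ for almost every $s \in [0,1]^n$, and suppose $0 \notin \mathrm{supp}(x^\dagger)$, i.e. there exists $r>0$ such that $x^\dagger(t) = 0$ for almost every $t \in B_r(0) \cap [0,1]^n$. Then there exist infinitely many other functions $\hat{x} \in L^2([0,1]^n)$ (distinct from $x^\dagger$ and from one another) satisfying $[\hat{x} * \hat{x}](s) = y(s)$ for almost every $s \in [0,1]^n$.
   Context: All functions are real-valued. $L^2([0,1]^n)$ denotes the real functions in $L^2(\mathbb{R}^n)$ vanishing a.e. outside the unit cube $[0,1]^n$. The convolution is $[f*g](s) = \int_{\mathbb{R}^n} f(s-t)\,g(t)\,dt$, which for $f,g \in L^2([0,1]^n)$ and $s \in [0,1]^n$ equals $\int_{[0,s_1]\times\cdots\times[0,s_n]} f(s-t)g(t)\,dt$. $B_r(0)$ is the open Euclidean ball of radius $r$ about the origin; $\mathrm{supp}$ denotes the essential support with respect to Lebesgue measure. *)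

theory Defs
  imports "HOL-Analysis.Analysis"
begin

definition unit_cube :: "'a::euclidean_space set" where
  "unit_cube = cbox 0 One"

definition L2_cube :: "('a::euclidean_space \<Rightarrow> real) set" where
  "L2_cube = {f. f \<in> borel_measurable lebesgue \<and>
                  integrable lebesgue (\<lambda>t. (f t)\<^sup>2) \<and>
                  (AE t in lebesgue. t \<notin> unit_cube \<longrightarrow> f t = 0)}"

definition conv :: "('a::euclidean_space \<Rightarrow> real) \<Rightarrow> ('a \<Rightarrow> real) \<Rightarrow> 'a \<Rightarrow> real" where
  "conv f g s = (\<integral>t. f (s - t) * g t \<partial>lebesgue)"

end

theory Submission
  imports Defs
begin

lemma null_reflect:
  fixes N :: "'a::euclidean_space set" and s :: 'a
  assumes N: "N \<in> null_sets lebesgue"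
  shows "{t. s - t \<in> N} \<in> null_sets lebesgue"
proof -
  have eq: "{t. s - t \<in> N} = (\<lambda>x. (-1) *\<^sub>R x + s) ` N"
  proof
    show "{t. s - t \<in> N} \<subseteq> (\<lambda>x. (-1) *\<^sub>R x + s) ` N"
    proof
      fix t assume "t \<in> {t. s - t \<in> N}"
      then have "s - t \<in> N" by simp
      moreover have "t = (-1) *\<^sub>R (s - t) + s" by simp
      ultimately show "t \<in> (\<lambda>x. (-1) *\<^sub>R x + s) ` N" by blast
    qed
  qed auto
  have e2: "(\<lambda>x. (-1) *\<^sub>R x + s) ` N = (+) s ` ((\<lambda>x. (-1) *\<^sub>R x) ` N)"
    by (auto simp: image_image add.commute)
  have "(\<lambda>x. (-1) *\<^sub>R x) ` N = ((*\<^sub>R) (-1)) -` N \<inter> space lebesgue"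
    by force
  also have "\<dots> \<in> sets lebesgue"
    using N by (intro measurable_sets[OF lebesgue_measurable_scaling]) auto
  finally have "(+) s ` ((\<lambda>x. (-1) *\<^sub>R x) ` N) \<in> sets lebesgue"
    by (rule lebesgue_sets_translation)
  then have m: "{t. s - t \<in> N} \<in> sets lebesgue" using eq e2 by simp
  have "emeasure lebesgue {t. s - t \<in> N} = 0"
    unfolding eq using emeasure_lebesgue_affine[of "-1" s N] N by (simp add: null_sets_def)
  with m show ?thesis by (simp add: null_sets_def)
qed

lemma AE_reflect:
  fixes s :: "'a::euclidean_space"
  assumes "AE t in lebesgue. P t"
  shows "AE t in lebesgue. P (s - t)"
proof -
  from assms obtain N where N: "N \<in> null_sets lebesgue" "{t \<in> space lebesgue. \<not> P t} \<subseteq> N"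
    unfolding eventually_ae_filter by auto
  show ?thesis
    by (rule AE_I'[OF null_reflect[OF N(1), of s]]) (use N(2) in auto)
qed

lemma integral_cong_AE_lebesgue:
  fixes f g :: "'a::euclidean_space \<Rightarrow> real"
  assumes "AE t in lebesgue. f t = g t"
  shows "integral\<^sup>L lebesgue f = integral\<^sup>L lebesgue g"
proof (cases "f \<in> borel_measurable lebesgue")
  case True
  then have "g \<in> borel_measurable lebesgue" using borel_measurable_AE assms by blast
  then show ?thesis using True assms integral_cong_AE by blast
next
  case False
  have "AE t in lebesgue. g t = f t" using assms by auto
  then have "g \<notin> borel_measurable lebesgue" using borel_measurable_AE False by blast
  then show ?thesis using False
    by (metis borel_measurable_integrable not_integrable_integral_eq)
qed

lemma sq_bound:
  fixes a b :: real
  shows "(a + b)\<^sup>2 \<le> 2 * a\<^sup>2 + 2 * b\<^sup>2"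
proof -
  have "(a + b)\<^sup>2 + (a - b)\<^sup>2 = 2 * a\<^sup>2 + 2 * b\<^sup>2"
    by (simp add: power2_eq_square algebra_simps)
  moreover have "0 \<le> (a - b)\<^sup>2" by simp
  ultimately show ?thesis by linarith
qed

lemma L2_lemma:
  fixes xd :: "'a::euclidean_space \<Rightarrow> real" and f :: "nat \<Rightarrow> 'a \<Rightarrow> real"
  assumes xdm: "xd \<in> borel_measurable lebesgue" and Am: "A \<in> sets lebesgue"
  and xdi: "integrable lebesgue (\<lambda>t. (xd t)\<^sup>2)"
  and xdo: "AE t in lebesgue. t \<notin> unit_cube \<longrightarrow> xd t = 0"
  and f_def: "\<And>k t. f k t = xd t + real (Suc k) * indicator A t"
  and i1: "integrable lebesgue (indicator A :: 'a \<Rightarrow> real)"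
  and F1: "\<And>t. t \<in> A \<Longrightarrow> t \<in> unit_cube \<and> t \<bullet> One > n - c"
  shows "f k \<in> L2_cube"
  proof -
    have "(indicator A :: 'a \<Rightarrow> real) \<in> borel_measurable lebesgue"
      using Am by (rule borel_measurable_indicator)
    then have "(\<lambda>t. real (Suc k) * indicator A t) \<in> borel_measurable lebesgue"
      by (rule borel_measurable_times[OF borel_measurable_const])
    then have m0: "(\<lambda>t. xd t + real (Suc k) * indicator A t) \<in> borel_measurable lebesgue"
      using xdm by (rule borel_measurable_add[rotated])
    have m: "f k \<in> borel_measurable lebesgue"
      using m0 unfolding f_def[abs_def] .
    define K where "K = 2 * (real (Suc k))\<^sup>2"
    have "integrable lebesgue (\<lambda>t. 2 * (xd t)\<^sup>2 + K * indicator A t)"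
      by (intro Bochner_Integration.integrable_add Bochner_Integration.integrable_mult_right xdi i1)
    then have i: "integrable lebesgue (\<lambda>t. (f k t)\<^sup>2)"
    proof (rule Bochner_Integration.integrable_bound)
      show "(\<lambda>t. (f k t)\<^sup>2) \<in> borel_measurable lebesgue" using m by measurable
      show "AE t in lebesgue. norm ((f k t)\<^sup>2) \<le> norm (2 * (xd t)\<^sup>2 + K * indicator A t)"
      proof (rule AE_I2)
        fix t
        have b: "(f k t)\<^sup>2 \<le> 2 * (xd t)\<^sup>2 + K * indicator A t"
        proof (cases "t \<in> A")
          case True
          then show ?thesis using sq_bound[of "xd t" "real (Suc k)"] by (simp add: f_def K_def)
        next
          case False
          then show ?thesis by (simp add: f_def)
        qed
        have nn: "0 \<le> 2 * (xd t)\<^sup>2 + K * indicator A t" by (simp add: K_def)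
        have nn2: "0 \<le> (f k t)\<^sup>2" by simp
        show "norm ((f k t)\<^sup>2) \<le> norm (2 * (xd t)\<^sup>2 + K * indicator A t)"
          unfolding real_norm_def abs_of_nonneg[OF nn] abs_of_nonneg[OF nn2] by (rule b)
      qed
    qed
    have "AE t in lebesgue. t \<notin> unit_cube \<longrightarrow> f k t = 0"
      using xdo by eventually_elim (auto simp: f_def indicator_def dest: F1)
    with m i show ?thesis unfolding L2_cube_def by blast
  qed

lemma cube_le:
  fixes s :: "'a::euclidean_space"
  assumes "s \<in> unit_cube"
  shows "s \<bullet> One \<le> real DIM('a)"
proof -
  have "s \<bullet> One = (\<Sum>b\<in>Basis. s \<bullet> b)" by (simp add: inner_sum_right)
  also have "\<dots> \<le> (\<Sum>b\<in>(Basis::'a set). 1)"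
    using assms by (intro sum_mono) (auto simp: unit_cube_def mem_box)
  finally show ?thesis by simp
qed

lemma cube_norm:
  fixes s :: "'a::euclidean_space"
  assumes "s \<in> unit_cube"
  shows "(norm s)\<^sup>2 \<le> s \<bullet> One"
proof -
  have "(norm s)\<^sup>2 = s \<bullet> s" by (simp add: power2_norm_eq_inner)
  also have "\<dots> = (\<Sum>b\<in>Basis. (s \<bullet> b) * (s \<bullet> b))"
    by (rule euclidean_inner)
  also have "\<dots> \<le> (\<Sum>b\<in>Basis. s \<bullet> b)"
  proof (intro sum_mono)
    fix b :: 'a assume "b \<in> Basis"
    then have "0 \<le> s \<bullet> b" "s \<bullet> b \<le> 1" using assms by (auto simp: unit_cube_def mem_box)
    then show "(s \<bullet> b) * (s \<bullet> b) \<le> s \<bullet> b" by (simp add: mult_left_le)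
  qed
  also have "\<dots> = s \<bullet> One" by (simp add: inner_sum_right)
  finally show ?thesis .
qed

theorem theorem3p4:
  fixes y xd :: "'a::euclidean_space \<Rightarrow> real"
  assumes y: "y \<in> L2_cube"
    and xd: "xd \<in> L2_cube"
    and sol: "AE s in lebesgue. s \<in> unit_cube \<longrightarrow> conv xd xd s = y s"
    and supp: "\<exists>r>0. AE t in lebesgue. t \<in> ball 0 r \<inter> unit_cube \<longrightarrow> xd t = 0"
  shows "\<exists>S. infinite S \<and> S \<subseteq> L2_cube
           \<and> (\<forall>xh\<in>S. AE s in lebesgue. s \<in> unit_cube \<longrightarrow> conv xh xh s = y s)
           \<and> (\<forall>xh\<in>S. \<not> (AE t in lebesgue. xh t = xd t))
           \<and> (\<forall>a\<in>S. \<forall>b\<in>S. a \<noteq> b \<longrightarrow> \<not> (AE t in lebesgue. a t = b t))"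
proof -
  obtain r where r: "r > 0" and rz: "AE t in lebesgue. t \<in> ball 0 r \<inter> unit_cube \<longrightarrow> xd t = 0"
    using supp by blast
  have xdm: "xd \<in> borel_measurable lebesgue" and xdi: "integrable lebesgue (\<lambda>t. (xd t)\<^sup>2)"
    and xdo: "AE t in lebesgue. t \<notin> unit_cube \<longrightarrow> xd t = 0"
    using xd by (auto simp: L2_cube_def)
  define n where "n = real DIM('a)"
  have n1: "n \<ge> 1" unfolding n_def using DIM_positive[where 'a='a] by linarith
  define c where "c = min (r\<^sup>2) (1/2)"
  have c0: "c > 0" using r by (simp add: c_def)
  have cr: "c \<le> r\<^sup>2" and ch: "c \<le> 1/2" by (auto simp: c_def)
  define e where "e = c / n"
  have e0: "e > 0" using c0 n1 by (simp add: e_def)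
  have e1: "e \<le> 1/2" using ch n1 unfolding e_def by (simp add: divide_le_eq) 
  define A :: "'a set" where "A = box ((1 - e) *\<^sub>R One) One"
  have F1: "t \<in> unit_cube \<and> t \<bullet> One > n - c" if "t \<in> A" for t
  proof -
    have tb: "1 - e < t \<bullet> b \<and> t \<bullet> b < 1" if "b \<in> Basis" for b
      using \<open>t \<in> A\<close> that by (auto simp: A_def mem_box)
    have "t \<in> unit_cube" unfolding unit_cube_def mem_box
    proof (intro ballI conjI)
      fix b :: 'a assume b: "b \<in> Basis"
      show "0 \<bullet> b \<le> t \<bullet> b" using tb[OF b] e1 by simp
      show "t \<bullet> b \<le> One \<bullet> b" using tb[OF b] b by simp
    qed
    moreover have "(\<Sum>b\<in>(Basis::'a set). 1 - e) < (\<Sum>b\<in>Basis. t \<bullet> b)"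
      using tb by (intro sum_strict_mono) auto
    then have "n * (1 - e) < t \<bullet> One" by (simp add: n_def inner_sum_right)
    then have "n - c < t \<bullet> One" using n1 by (simp add: e_def algebra_simps)
    ultimately show ?thesis by simp
  qed
  have Am: "A \<in> sets lebesgue" unfolding A_def by simp
  have Afin: "emeasure lebesgue A < \<infinity>"
    unfolding A_def using emeasure_lborel_box_finite by simp
  have Apos: "emeasure lebesgue A \<noteq> 0"
  proof -
    have "emeasure lebesgue A = ennreal (e ^ DIM('a))"
      unfolding A_def using e0 by (simp add: emeasure_lborel_box inner_diff_left)
    then show ?thesis using e0 by simp
  qed
  have notAE: False if "AE t in lebesgue. t \<notin> A"
  proof -
    have "emeasure lebesgue A = 0"
      using that AE_iff_measurable[OF Am, of "\<lambda>t. t \<notin> A"] by auto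
    then show False using Apos by simp
  qed
  define f :: "nat \<Rightarrow> 'a \<Rightarrow> real" where "f k t = xd t + real (Suc k) * indicator A t" for k t
  have Z: "AE t in lebesgue. xd t \<noteq> 0 \<longrightarrow> t \<in> unit_cube \<and> norm t \<ge> r"
    using rz xdo by eventually_elim (auto simp: not_le)
  have key: "AE t in lebesgue. f k (s - t) * f k t = xd (s - t) * xd t"
    if s: "s \<in> unit_cube" for s k
  proof -
    have Z': "AE t in lebesgue. xd (s - t) \<noteq> 0 \<longrightarrow> (s - t) \<in> unit_cube \<and> norm (s - t) \<ge> r"
      using AE_reflect[OF Z] .
    have sle: "s \<bullet> One \<le> n" using cube_le[OF s] by (simp add: n_def)
    have big: "u \<bullet> One \<ge> c" if "u \<in> unit_cube" "norm u \<ge> r" for u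
    proof -
      have "r\<^sup>2 \<le> (norm u)\<^sup>2" using that r by (simp add: power_mono)
      then show ?thesis using cube_norm[OF that(1)] cr by linarith
    qed
    have sOne: "s \<bullet> One = (s - t) \<bullet> One + t \<bullet> One" for t by (simp add: inner_diff_left)
    show ?thesis
      using Z Z'
    proof eventually_elim
      case (elim t)
      have c1: "\<not> (t \<in> A \<and> s - t \<in> A)"
      proof
        assume "t \<in> A \<and> s - t \<in> A"
        then have "t \<bullet> One > n - c" "(s - t) \<bullet> One > n - c" using F1 by auto
        then show False using sOne[of t] sle ch n1 by linarith
      qed
      have c2: "xd (s - t) = 0" if "t \<in> A"
      proof (rule ccontr)
        assume "xd (s - t) \<noteq> 0"
        then have "(s - t) \<bullet> One \<ge> c" using elim big by blast
        moreover have "t \<bullet> One > n - c" using F1 that by auto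
        ultimately show False using sOne[of t] sle by linarith
      qed
      have c3: "xd t = 0" if "s - t \<in> A"
      proof (rule ccontr)
        assume "xd t \<noteq> 0"
        then have "t \<bullet> One \<ge> c" using elim big by blast
        moreover have "(s - t) \<bullet> One > n - c" using F1 that by auto
        ultimately show False using sOne[of t] sle by linarith
      qed
      show ?case
        using c1 c2 c3 by (cases "t \<in> A"; cases "s - t \<in> A") (auto simp: f_def)
    qed
  qed
  have conv_eq: "conv (f k) (f k) s = conv xd xd s" if "s \<in> unit_cube" for s k
    unfolding conv_def by (rule integral_cong_AE_lebesgue[OF key[OF that]])
  have i1: "integrable lebesgue (indicator A :: 'a \<Rightarrow> real)"
    using Am Afin by (rule integrable_real_indicator)
  have L2: "f k \<in> L2_cube" for k
    by (rule L2_lemma[OF xdm Am xdi xdo f_def i1 F1])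
  have dist: "\<not> (AE t in lebesgue. f i t = f j t)" if "i \<noteq> j" for i j
  proof
    assume "AE t in lebesgue. f i t = f j t"
    then have "AE t in lebesgue. t \<notin> A"
      by eventually_elim (use that in \<open>auto simp: f_def\<close>)
    then show False by (rule notAE)
  qed
  have distx: "\<not> (AE t in lebesgue. f i t = xd t)" for i
  proof
    assume "AE t in lebesgue. f i t = xd t"
    then have "AE t in lebesgue. t \<notin> A"
      by eventually_elim (auto simp: f_def)
    then show False by (rule notAE)
  qed
  have inj: "inj f"
  proof (rule injI)
    fix i j assume "f i = f j"
    then show "i = j" using dist[of i j] by auto
  qed
  show ?thesis
  proof (intro exI[of _ "range f"] conjI ballI impI)
    show "infinite (range f)" using inj range_inj_infinite by blast
    show "range f \<subseteq> L2_cube" using L2 by auto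
  next
    fix xh assume "xh \<in> range f"
    then obtain k where k: "xh = f k" by auto
    show "AE s in lebesgue. s \<in> unit_cube \<longrightarrow> conv xh xh s = y s"
      using sol by eventually_elim (auto simp: k conv_eq)
    show "\<not> (AE t in lebesgue. xh t = xd t)" using distx k by simp
  next
    fix a b assume "a \<in> range f" "b \<in> range f" "a \<noteq> b"
    then obtain i j where ij: "a = f i" "b = f j" by auto
    with \<open>a \<noteq> b\<close> have "i \<noteq> j" by auto
    then show "\<not> (AE t in lebesgue. a t = b t)" using dist ij by simp
  qed
qed

end
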